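(* Let $N=\{1,\dots,n\}$, let $C:2^N\to\mathbb{R}_{\ge0}$ with $C(\emptyset)=0$ and $\max_S C(S)$ bounded by a polynomial in $n$, and let $\mathcal{D}$ be a bounded product distribution on $2^N$. For $i\in N$ let $v_i=\mathbb{E}_{S\sim\mathcal{D}\mid i\notin S}[C(S\cup\{i\})-C(S)]$. Given samples $(S_j,C(S_j))$, $S_j$ i.i.d. from $\mathcal{D}$, let $\mathcal{S}_i$ (resp. $\mathcal{S}_{-i}$) be the collection of samples containing (resp. not containing) $i$, let $\mathrm{avg}(\mathcal{S})=\frac{1}{|\mathcal{S}|}\sum_{S\in\mathcal{S}}C(S)$, and $\tilde v_i=\mathrm{avg}(\mathcal{S}_i)-\mathrm{avg}(\mathcal{S}_{-i})$. Then for all $i\in N$ and any $\delta>0$, given $\mathrm{poly}(n,1/\delta,1/\epsilon)$ samples, with probability at least $1-\delta$: if $v_i\ge1/\mathrm{poly}(n)$ then $(1-\epsilon)v_i\le\tilde v_i\le(1+\epsilon)v_i$; if $|v_i|<1/\mathrm{poly}(n)$ then $|v_i-\tilde v_i|\le\epsilon$; if $v_i\le-1/\mathrm{poly}(n)$ then $(1+\epsilon)v_i\le\tilde v_i\le(1-\epsilon)v_i$.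
   Context: A bounded product distribution on $2^N$ includes each element independently, with marginal probabilities between $1/\mathrm{poly}(n)$ and $1-1/\mathrm{poly}(n)$. *)

theory Defs
  imports "HOL-Probability.Probability"
begin

abbreviation ground :: "nat \<Rightarrow> nat set" where
  "ground n \<equiv> {1..n}"

definition prod_dist :: "nat \<Rightarrow> (nat \<Rightarrow> real) \<Rightarrow> nat set pmf" where
  "prod_dist n p =
     map_pmf (\<lambda>f. {j \<in> ground n. f j})
       (Pi_pmf (ground n) False (\<lambda>j. bernoulli_pmf (p j)))"

definition bounded_marginals :: "real \<Rightarrow> nat \<Rightarrow> nat \<Rightarrow> (nat \<Rightarrow> real) \<Rightarrow> bool" where
  "bounded_marginals a k n p \<longleftrightarrow>
     (\<forall>j\<in>ground n. 1 / (a * real n ^ k) \<le> p j \<and> p j \<le> 1 - 1 / (a * real n ^ k))"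

definition bounded_cost :: "real \<Rightarrow> nat \<Rightarrow> nat \<Rightarrow> (nat set \<Rightarrow> real) \<Rightarrow> bool" where
  "bounded_cost a k n C \<longleftrightarrow> C {} = 0 \<and>
     (\<forall>S. S \<subseteq> ground n \<longrightarrow> 0 \<le> C S \<and> C S \<le> a * real n ^ k)"

definition marg_value :: "nat set pmf \<Rightarrow> (nat set \<Rightarrow> real) \<Rightarrow> nat \<Rightarrow> real" where
  "marg_value D C i =
     measure_pmf.expectation (cond_pmf D {S. i \<notin> S}) (\<lambda>S. C (insert i S) - C S)"

text \<open>Average of C over the samples with indices in J (a sub-collection, with multiplicity);
  the average of an empty collection is 0 (division by 0).\<close>
definition avg :: "(nat set \<Rightarrow> real) \<Rightarrow> (nat \<Rightarrow> nat set) \<Rightarrow> nat set \<Rightarrow> real" where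
  "avg C X J = (\<Sum>j\<in>J. C (X j)) / real (card J)"

definition est_value :: "(nat set \<Rightarrow> real) \<Rightarrow> nat \<Rightarrow> (nat \<Rightarrow> nat set) \<Rightarrow> nat \<Rightarrow> real" where
  "est_value C m X i = avg C X {j. j < m \<and> i \<in> X j} - avg C X {j. j < m \<and> i \<notin> X j}"

definition samples :: "nat \<Rightarrow> 'a pmf \<Rightarrow> (nat \<Rightarrow> 'a) pmf" where
  "samples m D = Pi_pmf {..<m} undefined (\<lambda>_. D)"

end

theory Submission
  imports Defs
begin


lemma exp_neg_le:
  fixes y :: real assumes "y > 0" shows "exp (- y) \<le> 1 / y"
proof -
  have "1 + y \<le> exp y" by (rule exp_ge_add_one_self)
  then have "y \<le> exp y" by linarith
  then have "inverse (exp y) \<le> inverse y" using assms by (intro le_imp_inverse_le) auto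
  then show ?thesis by (simp add: exp_minus field_simps)
qed

lemma hoeff:
  fixes D :: "'a pmf" and g :: "'a \<Rightarrow> real" and m :: nat
  assumes m: "m > 0" and M: "M > 0" and t: "t > 0"
    and rng: "\<And>x. x \<in> set_pmf D \<Longrightarrow> g x \<in> {0..M}"
  shows "measure_pmf.prob (samples m D)
     {X. t \<le> \<bar>(\<Sum>j<m. g (X j)) / real m - measure_pmf.expectation D g\<bar>} \<le> M^2 / (real m * t^2)"
proof -
  define S where "S = samples m D"
  have comp: "map_pmf (\<lambda>X. X j) S = D" if "j < m" for j
    using that unfolding S_def samples_def by (subst Pi_pmf_component) auto
  have distr: "distr (measure_pmf S) borel (\<lambda>X. g (X j)) = distr (measure_pmf D) borel g" if "j < m" for j
  proof -
    have "distr (measure_pmf S) borel (\<lambda>X. g (X j)) =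
          distr (measure_pmf (map_pmf (\<lambda>X. X j) S)) borel g"
      unfolding map_pmf_rep_eq by (subst distr_distr) (auto simp: o_def)
    then show ?thesis using comp[OF that] by simp
  qed
  interpret H: Hoeffding_ineq_iid "measure_pmf S" "{..<m}" "\<lambda>j X. g (X j)" "\<lambda>X. g (X 0)" 0 M
     "measure_pmf.expectation D g"
  proof unfold_locales
    show "prob_space.indep_vars (measure_pmf S) (\<lambda>_. borel) (\<lambda>j X. g (X j)) {..<m}"
      unfolding S_def samples_def
      by (intro prob_space.indep_vars_compose2[OF _ indep_vars_Pi_pmf])
         (auto simp: measure_pmf.prob_space_axioms)
  next
    fix j assume "j \<in> {..<m}"
    then show "distr (measure_pmf S) borel (\<lambda>X. g (X j)) = distr (measure_pmf S) borel (\<lambda>X. g (X 0))"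
      using distr[of j] distr[of 0] m by simp
  next
    show "AE x in measure_pmf S. g (x 0) \<in> {0..M}"
    proof (rule AE_pmfI)
      fix X assume "X \<in> set_pmf S"
      then have "X 0 \<in> set_pmf (map_pmf (\<lambda>X. X 0) S)" by simp
      then show "g (X 0) \<in> {0..M}" using comp[of 0] m rng by simp
    qed
  next
    have "measure_pmf.expectation S (\<lambda>X. g (X 0)) = measure_pmf.expectation (map_pmf (\<lambda>X. X 0) S) g"
      by simp
    then show "measure_pmf.expectation D g \<equiv> measure_pmf.expectation S (\<lambda>X. g (X 0))"
      using comp[of 0] m by simp
  qed simp_all
  have ne: "{..<m} \<noteq> {}" using m by auto
  have h: "measure_pmf.prob S {X. t \<le> \<bar>(\<Sum>j<m. g (X j)) / real m - measure_pmf.expectation D g\<bar>}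
      \<le> 2 * exp (-2 * real m * t^2 / (M - 0)^2)"
    using H.Hoeffding_ineq_abs_ge'[of t] t M ne by simp
  have x: "0 < 2 * real m * t^2 / M^2" using m t M by simp
  have "exp (-2 * real m * t^2 / M^2) \<le> 1 / (2 * real m * t^2 / M^2)"
    using exp_neg_le[OF x] by simp
  also have "\<dots> = M^2 / (2 * real m * t^2)" by simp
  finally have e: "exp (-2 * real m * t^2 / M^2) \<le> M^2 / (2 * real m * t^2)" .
  have "2 * exp (-2 * real m * t^2 / M^2) \<le> 2 * (M^2 / (2 * real m * t^2))"
    using e by (rule mult_left_mono) simp
  also have "2 * (M^2 / (2 * real m * t^2)) = M^2 / (real m * t^2)" by simp
  finally have "2 * exp (-2 * real m * t^2 / M^2) \<le> M^2 / (real m * t^2)" .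
  with h show ?thesis unfolding S_def by simp
qed




lemma exp_pair:
  fixes g :: "'a \<times> 'b \<Rightarrow> real"
  assumes fA: "finite (set_pmf A)" and fB: "finite (set_pmf B)"
  shows "measure_pmf.expectation (pair_pmf A B) g =
         measure_pmf.expectation A (\<lambda>a. measure_pmf.expectation B (\<lambda>b. g (a, b)))"
proof -
  have "measure_pmf.expectation (pair_pmf A B) g = (\<Sum>x\<in>set_pmf A \<times> set_pmf B. g x * pmf (pair_pmf A B) x)"
    by (rule integral_measure_pmf_real) (use fA fB in auto)
  also have "\<dots> = (\<Sum>a\<in>set_pmf A. \<Sum>b\<in>set_pmf B. g (a,b) * (pmf A a * pmf B b))"
    by (simp add: sum.cartesian_product case_prod_unfold pmf_pair[symmetric])
  also have "\<dots> = (\<Sum>a\<in>set_pmf A. (\<Sum>b\<in>set_pmf B. g (a,b) * pmf B b) * pmf A a)"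
    by (simp add: sum_distrib_right sum_distrib_left mult_ac)
  also have "\<dots> = (\<Sum>a\<in>set_pmf A. measure_pmf.expectation B (\<lambda>b. g (a, b)) * pmf A a)"
    by (intro sum.cong refl arg_cong2[where f="(*)"] integral_measure_pmf_real[symmetric]) (use fB in auto)
  also have "\<dots> = measure_pmf.expectation A (\<lambda>a. measure_pmf.expectation B (\<lambda>b. g (a, b)))"
    by (rule integral_measure_pmf_real[symmetric]) (use fA in auto)
  finally show ?thesis .
qed

definition Drest :: "nat \<Rightarrow> (nat \<Rightarrow> real) \<Rightarrow> nat \<Rightarrow> nat set pmf" where
  "Drest n p i = map_pmf (\<lambda>f. {j \<in> ground n. f j} - {i})
       (Pi_pmf (ground n - {i}) False (\<lambda>j. bernoulli_pmf (p j)))"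

lemma set_Drest: "set_pmf (Drest n p i) \<subseteq> {T. T \<subseteq> ground n \<and> i \<notin> T}"
  unfolding Drest_def by auto

lemma finite_Drest: "finite (set_pmf (Drest n p i))"
  by (rule finite_subset[OF set_Drest]) auto

lemma set_prod_dist: "set_pmf (prod_dist n p) \<subseteq> {T. T \<subseteq> ground n}"
  unfolding prod_dist_def by auto

lemma finite_prod_dist: "finite (set_pmf (prod_dist n p))"
  by (rule finite_subset[OF set_prod_dist]) auto

lemma prod_dist_decomp:
  assumes i: "i \<in> ground n"
  shows "prod_dist n p = map_pmf (\<lambda>(y,T). if y then insert i T else T)
            (pair_pmf (bernoulli_pmf (p i)) (Drest n p i))"
proof -
  have G: "ground n = insert i (ground n - {i})" using i by auto
  have "prod_dist n p = map_pmf (\<lambda>f. {j \<in> ground n. f j})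
      (Pi_pmf (insert i (ground n - {i})) False (\<lambda>j. bernoulli_pmf (p j)))"
    unfolding prod_dist_def using G by simp
  also have "\<dots> = map_pmf (\<lambda>f. {j \<in> ground n. f j})
      (map_pmf (\<lambda>(y,f). f(i:=y)) (pair_pmf (bernoulli_pmf (p i)) (Pi_pmf (ground n - {i}) False (\<lambda>j. bernoulli_pmf (p j)))))"
    by (subst Pi_pmf_insert) auto
  also have "\<dots> = map_pmf (\<lambda>(y,T). if y then insert i T else T)
            (pair_pmf (bernoulli_pmf (p i)) (Drest n p i))"
    unfolding Drest_def pair_map_pmf2 pmf.map_comp
    by (intro pmf.map_cong refl) (use i in \<open>auto simp: o_def split: if_splits\<close>)
  finally show ?thesis .
qed

lemma exp_decomp:
  fixes \<phi> :: "nat set \<Rightarrow> real"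
  assumes i: "i \<in> ground n" and q: "0 \<le> p i" "p i \<le> 1"
  shows "measure_pmf.expectation (prod_dist n p) \<phi> =
     p i * measure_pmf.expectation (Drest n p i) (\<lambda>T. \<phi> (insert i T))
     + (1 - p i) * measure_pmf.expectation (Drest n p i) \<phi>"
proof -
  have fb: "finite (set_pmf (bernoulli_pmf (p i)))"
    by (rule finite_subset[of _ UNIV]) auto
  show ?thesis
    apply (subst prod_dist_decomp[OF i])
    apply (subst integral_map_pmf)
    apply (subst exp_pair[OF fb finite_Drest])
    using q by (simp add: mult_ac)
qed




lemma exp_cong_pmf:
  fixes f g :: "'a \<Rightarrow> real"
  assumes "\<And>x. x \<in> set_pmf M \<Longrightarrow> f x = g x"
  shows "measure_pmf.expectation M f = measure_pmf.expectation M g"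
  by (rule integral_cong_AE) (auto intro!: AE_pmfI assms)

lemma exp_bounds_pmf:
  fixes f :: "'a \<Rightarrow> real"
  assumes "finite (set_pmf M)" "\<And>x. x \<in> set_pmf M \<Longrightarrow> f x \<in> {lo..hi}"
  shows "measure_pmf.expectation M f \<in> {lo..hi}"
  using assms
  by (auto intro!: measure_pmf.integral_ge_const measure_pmf.integral_le_const AE_pmfI
       integrable_measure_pmf_finite)

lemma exp_cond:
  fixes f :: "'a \<Rightarrow> real"
  assumes fin: "finite (set_pmf D)" and pos: "measure_pmf.prob D s > 0"
  shows "measure_pmf.expectation (cond_pmf D s) f =
         measure_pmf.expectation D (\<lambda>x. if x \<in> s then f x else 0) / measure_pmf.prob D s"
proof -
  have ne: "set_pmf D \<inter> s \<noteq> {}" using pos measure_pmf_zero_iff[of D s] by auto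
  have "measure_pmf.expectation (cond_pmf D s) f = (\<Sum>x\<in>set_pmf D. f x * pmf (cond_pmf D s) x)"
    by (rule integral_measure_pmf_real) (use fin ne in auto)
  also have "\<dots> = (\<Sum>x\<in>set_pmf D. (if x \<in> s then f x else 0) * pmf D x) / measure_pmf.prob D s"
    by (simp add: pmf_cond[OF ne] sum_divide_distrib, intro sum.cong refl) auto
  also have "(\<Sum>x\<in>set_pmf D. (if x \<in> s then f x else 0) * pmf D x) =
      measure_pmf.expectation D (\<lambda>x. if x \<in> s then f x else 0)"
    by (rule integral_measure_pmf_real[symmetric]) (use fin in auto)
  finally show ?thesis .
qed

context
  fixes n :: nat and p :: "nat \<Rightarrow> real" and i :: nat
  assumes i: "i \<in> ground n" and q0: "0 < p i" and q1: "p i < 1"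
begin

lemma exp_in:
  "measure_pmf.expectation (prod_dist n p) (\<lambda>S. if i \<in> S then f S else 0) =
     p i * measure_pmf.expectation (Drest n p i) (\<lambda>T. f (insert i T))"
proof -
  have "measure_pmf.expectation (Drest n p i) (\<lambda>S. if i \<in> S then f S else 0) = 
        measure_pmf.expectation (Drest n p i) (\<lambda>S. 0)"
    by (rule exp_cong_pmf) (use set_Drest in auto)
  then show ?thesis using q0 q1 by (subst exp_decomp[OF i]) auto
qed

lemma exp_out:
  "measure_pmf.expectation (prod_dist n p) (\<lambda>S. if i \<notin> S then f S else 0) =
     (1 - p i) * measure_pmf.expectation (Drest n p i) f"
proof -
  have "measure_pmf.expectation (Drest n p i) (\<lambda>S. if i \<notin> S then f S else 0) = 
        measure_pmf.expectation (Drest n p i) f"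
    by (rule exp_cong_pmf) (use set_Drest in auto)
  then show ?thesis using q0 q1 by (subst exp_decomp[OF i]) auto
qed

lemma prob_out: "measure_pmf.prob (prod_dist n p) {S. i \<notin> S} = 1 - p i"
proof -
  have "measure_pmf.prob (prod_dist n p) {S. i \<notin> S} =
        measure_pmf.expectation (prod_dist n p) (indicator {S. i \<notin> S})"
    by simp
  also have "\<dots> = measure_pmf.expectation (prod_dist n p) (\<lambda>S. if i \<notin> S then (1::real) else 0)"
    by (rule exp_cong_pmf) (auto simp: indicator_def)
  also have "\<dots> = 1 - p i" by (subst exp_out) simp
  finally show ?thesis .
qed

lemma marg_eq:
  "marg_value (prod_dist n p) C i =
    measure_pmf.expectation (Drest n p i) (\<lambda>T. C (insert i T)) -
    measure_pmf.expectation (Drest n p i) C"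
proof -
  have pos: "measure_pmf.prob (prod_dist n p) {S. i \<notin> S} > 0" using prob_out q1 by simp
  have "marg_value (prod_dist n p) C i =
     measure_pmf.expectation (prod_dist n p) (\<lambda>S. if i \<notin> S then C (insert i S) - C S else 0) / (1 - p i)"
    unfolding marg_value_def by (subst exp_cond[OF finite_prod_dist pos]) (simp add: prob_out)
  also have "\<dots> = measure_pmf.expectation (Drest n p i) (\<lambda>T. C (insert i T) - C T)"
    using q1 by (subst exp_out) simp
  also have "\<dots> = measure_pmf.expectation (Drest n p i) (\<lambda>T. C (insert i T)) -
    measure_pmf.expectation (Drest n p i) C"
    by (rule Bochner_Integration.integral_diff) (auto intro: integrable_measure_pmf_finite finite_Drest)
  finally show ?thesis .
qed

end



lemma ratio:
  fixes \<alpha> k q \<mu> t M \<pi> :: real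
  assumes pi: "0 < \<pi>" "\<pi> / 2 \<le> k" and a: "\<bar>\<alpha> - q * \<mu>\<bar> < t" and kq: "\<bar>k - q\<bar> < t"
    and mu: "0 \<le> \<mu>" "\<mu> \<le> M"
  shows "\<bar>\<alpha> / k - \<mu>\<bar> \<le> 2 * t * (1 + M) / \<pi>"
proof -
  have kpos: "k > 0" using pi by linarith
  have t0: "t > 0" using kq by linarith
  have "\<bar>\<mu> * (q - k)\<bar> = \<mu> * \<bar>q - k\<bar>" using mu by (simp add: abs_mult)
  also have "\<dots> \<le> M * t" using mu kq by (intro mult_mono) auto
  finally have m1: "\<bar>\<mu> * (q - k)\<bar> \<le> M * t" .
  have e1: "\<bar>\<alpha> - \<mu> * k\<bar> = \<bar>(\<alpha> - q * \<mu>) + \<mu> * (q - k)\<bar>" by (simp add: algebra_simps)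
  have num: "\<bar>\<alpha> - \<mu> * k\<bar> \<le> t * (1 + M)"
    using a m1 abs_triangle_ineq[of "\<alpha> - q * \<mu>" "\<mu> * (q - k)"] unfolding e1
    by (simp only: distrib_left mult_1_right mult.commute[of t M])
  have eq: "\<alpha> / k - \<mu> = (\<alpha> - \<mu> * k) / k" using kpos by (simp add: field_simps)
  have "\<bar>\<alpha> / k - \<mu>\<bar> = \<bar>\<alpha> - \<mu> * k\<bar> / k" unfolding eq using kpos by simp
  also have "\<dots> \<le> t * (1 + M) / k" using kpos num by (intro divide_right_mono) auto
  also have "\<dots> \<le> t * (1 + M) / (\<pi> / 2)"
    using pi t0 mu by (intro divide_left_mono) auto
  also have "\<dots> = 2 * t * (1 + M) / \<pi>" by simp
  finally show ?thesis .
qed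

lemma est_eq:
  fixes C :: "nat set \<Rightarrow> real" and X :: "nat \<Rightarrow> nat set" and m i :: nat
  defines "K \<equiv> (\<Sum>j<m. if i \<in> X j then 1 else 0 :: real)"
  shows "est_value C m X i =
     (\<Sum>j<m. if i \<in> X j then C (X j) else 0) / K - (\<Sum>j<m. if i \<notin> X j then C (X j) else 0) / (real m - K)"
proof -
  have s1: "{j. j < m \<and> i \<in> X j} = {j\<in>{..<m}. i \<in> X j}" by auto
  have s0: "{j. j < m \<and> i \<notin> X j} = {j\<in>{..<m}. i \<notin> X j}" by auto
  have c1: "real (card {j\<in>{..<m}. i \<in> X j}) = K"
    unfolding K_def by (simp only: real_of_card sum.inter_filter[OF finite_lessThan])
  have c0: "real (card {j\<in>{..<m}. i \<notin> X j}) = (\<Sum>j<m. if i \<notin> X j then 1 else 0 :: real)"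
    by (simp only: real_of_card sum.inter_filter[OF finite_lessThan])
  have "(\<Sum>j<m. if i \<notin> X j then 1 else 0 :: real) = (\<Sum>j<m. 1 - (if i \<in> X j then 1 else 0 :: real))"
    by (intro sum.cong) auto
  also have "\<dots> = real m - K" unfolding K_def by (simp add: sum_subtractf)
  finally have c0': "real (card {j\<in>{..<m}. i \<notin> X j}) = real m - K" using c0 by simp
  show ?thesis
    unfolding est_value_def avg_def s1 s0 c1 c0'
    by (simp only: sum.inter_filter[OF finite_lessThan])
qed




lemma cases_final:
  fixes v w \<eta> \<epsilon> x :: real
  assumes vw: "\<bar>w - v\<bar> \<le> \<eta>" and e1: "\<eta> \<le> \<epsilon> * (1 / x)" and e2: "\<eta> \<le> \<epsilon>"
    and x: "x > 0" and ep: "\<epsilon> > 0"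
  shows "(v \<ge> 1 / x \<longrightarrow> (1 - \<epsilon>) * v \<le> w \<and> w \<le> (1 + \<epsilon>) * v) \<and>
         (\<bar>v\<bar> < 1 / x \<longrightarrow> \<bar>v - w\<bar> \<le> \<epsilon>) \<and>
         (v \<le> - 1 / x \<longrightarrow> (1 + \<epsilon>) * v \<le> w \<and> w \<le> (1 - \<epsilon>) * v)"
proof (intro conjI impI)
  assume "v \<ge> 1 / x"
  then have "\<epsilon> * (1 / x) \<le> \<epsilon> * v" using ep by (intro mult_left_mono) auto
  then have "\<bar>w - v\<bar> \<le> \<epsilon> * v" using vw e1 by linarith
  then show "(1 - \<epsilon>) * v \<le> w" "w \<le> (1 + \<epsilon>) * v" by (auto simp: algebra_simps abs_le_iff)
next
  assume "\<bar>v\<bar> < 1 / x"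
  then show "\<bar>v - w\<bar> \<le> \<epsilon>" using vw e2 by (simp add: abs_minus_commute)
next
  assume "v \<le> - 1 / x"
  then have "1 / x \<le> - v" by simp
  then have "\<epsilon> * (1 / x) \<le> \<epsilon> * (- v)" using ep by (intro mult_left_mono) auto
  then have "\<bar>w - v\<bar> \<le> - \<epsilon> * v" using vw e1 by linarith
  then show "(1 + \<epsilon>) * v \<le> w" "w \<le> (1 - \<epsilon>) * v" by (auto simp: algebra_simps abs_le_iff)
qed

lemma union3_bound:
  fixes P :: "'a pmf" and G B1 B2 B3 :: "'a set"
  assumes "UNIV - (B1 \<union> B2 \<union> B3) \<subseteq> G"
    and "measure_pmf.prob P B1 \<le> d" "measure_pmf.prob P B2 \<le> d" "measure_pmf.prob P B3 \<le> d"
  shows "measure_pmf.prob P G \<ge> 1 - 3 * d"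
proof -
  have "measure_pmf.prob P (B1 \<union> B2 \<union> B3) \<le> measure_pmf.prob P (B1 \<union> B2) + measure_pmf.prob P B3"
    by (rule measure_Un_le) auto
  also have "measure_pmf.prob P (B1 \<union> B2) \<le> measure_pmf.prob P B1 + measure_pmf.prob P B2"
    by (rule measure_Un_le) auto
  finally have u: "measure_pmf.prob P (B1 \<union> B2 \<union> B3) \<le> 3 * d" using assms by linarith
  have c: "measure_pmf.prob P (UNIV - (B1 \<union> B2 \<union> B3)) = 1 - measure_pmf.prob P (B1 \<union> B2 \<union> B3)"
    using measure_pmf.prob_compl[of "B1 \<union> B2 \<union> B3" P] by simp
  have mm: "measure_pmf.prob P (UNIV - (B1 \<union> B2 \<union> B3)) \<le> measure_pmf.prob P G"
    using assms(1) by (intro measure_pmf.finite_measure_mono) auto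
  show ?thesis using u c mm by linarith
qed

lemma size_bound:
  fixes a c \<delta> \<epsilon> :: real and n k l :: nat
  assumes a: "a > 0" and c: "c > 0" and n: "n \<ge> 1" and d: "\<delta> > 0" and e: "\<epsilon> > 0"
  defines "R \<equiv> real n + 1 / \<delta> + 1 / \<epsilon>"
  defines "M0 \<equiv> a * real n ^ k"
  defines "\<eta> \<equiv> min \<epsilon> 1 * min (1 / (c * real n ^ l)) 1"
  shows "48 * ((M0 + 1) * (1 + (M0 + 1)) * M0 / \<eta>)^2 / \<delta> \<le> 48 * (a+2)^6 * (c+1)^2 * R^(6*k+2*l+3)"
proof -
  have n1: "real n \<ge> 1" using n by simp
  have id: "1 / \<delta> > 0" "1 / \<epsilon> > 0" using d e by auto
  have R1: "R \<ge> 1" and Rn: "real n \<le> R" and Rd: "1 / \<delta> \<le> R" and Re: "1 / \<epsilon> \<le> R"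
    using n1 id unfolding R_def by linarith+
  have Rk: "real n ^ k \<le> R ^ k" for k using Rn n1 by (intro power_mono) auto
  have Rk1: "1 \<le> R ^ k" for k using R1 by (rule one_le_power)
  have nk1: "1 \<le> real n ^ k" for k using n1 by (rule one_le_power)
  have M0b: "M0 \<le> (a+2) * R^k"
  proof -
    have "M0 \<le> a * R^k" unfolding M0_def using a Rk[of k] by (intro mult_left_mono) auto
    then show ?thesis using Rk1[of k] by (simp add: algebra_simps)
  qed
  have M0p: "M0 > 0" unfolding M0_def using a nk1[of k] by (intro mult_pos_pos) linarith+
  have M1b: "M0 + 1 \<le> (a+2) * R^k" and M2b: "1 + (M0 + 1) \<le> (a+2) * R^k"
  proof -
    have "M0 \<le> a * R^k" unfolding M0_def using a Rk[of k] by (intro mult_left_mono) auto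
    then show "M0 + 1 \<le> (a+2) * R^k" "1 + (M0 + 1) \<le> (a+2) * R^k"
      using Rk1[of k] by (simp_all add: algebra_simps)
  qed
  have cn: "c * real n ^ l > 0" using c nk1[of l] by (intro mult_pos_pos) linarith+
  have i1: "1 / min \<epsilon> 1 \<le> R"
  proof (cases "\<epsilon> \<le> 1")
    case True then show ?thesis using Re by (simp add: min_def)
  next
    case False then show ?thesis using R1 by (simp add: min_def)
  qed
  have i2: "1 / min (1 / (c * real n ^ l)) 1 \<le> (c+1) * R^l"
  proof (cases "1 / (c * real n ^ l) \<le> 1")
    case True
    then have "1 / min (1 / (c * real n ^ l)) 1 = c * real n ^ l" by (simp add: min_def)
    also have "\<dots> \<le> c * R^l" using c Rk[of l] by (intro mult_left_mono) auto
    also have "\<dots> \<le> (c+1) * R^l" using Rk1[of l] by (simp add: algebra_simps)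
    finally show ?thesis .
  next
    case False
    then have "1 / min (1 / (c * real n ^ l)) 1 = 1" by (simp add: min_def)
    also have "\<dots> \<le> 1 * R^l" using Rk1[of l] by simp
    also have "\<dots> \<le> (c+1) * R^l" using Rk1[of l] c by (intro mult_right_mono) auto
    finally show ?thesis .
  qed
  have ieta: "1 / \<eta> \<le> (c+1) * R^(l+1)"
  proof -
    have "1 / \<eta> = (1 / min \<epsilon> 1) * (1 / min (1 / (c * real n ^ l)) 1)" unfolding \<eta>_def by simp
    also have "\<dots> \<le> R * ((c+1) * R^l)" using i1 i2 e cn R1 by (intro mult_mono) auto
    also have "\<dots> = (c+1) * R^(l+1)" by (simp add: algebra_simps)
    finally show ?thesis .
  qed
  define Z where "Z = (a+2) * R^k * ((a+2) * R^k) * ((a+2) * R^k) * ((c+1) * R^(l+1))"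
  have etap: "\<eta> > 0" unfolding \<eta>_def using e cn by simp
  have Q0: "0 \<le> (M0 + 1) * (1 + (M0 + 1)) * M0 / \<eta>" using M0p etap by simp
  have QZ: "(M0 + 1) * (1 + (M0 + 1)) * M0 / \<eta> \<le> Z"
  proof -
    have "(M0 + 1) * (1 + (M0 + 1)) * M0 / \<eta> = (M0 + 1) * (1 + (M0 + 1)) * M0 * (1 / \<eta>)" by simp
    also have "\<dots> \<le> Z" unfolding Z_def using M0b M1b M2b ieta M0p etap
      by (intro mult_mono) auto
    finally show ?thesis .
  qed
  have "48 * ((M0 + 1) * (1 + (M0 + 1)) * M0 / \<eta>)^2 / \<delta> =
      48 * ((M0 + 1) * (1 + (M0 + 1)) * M0 / \<eta>)^2 * (1 / \<delta>)" by simp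
  also have "\<dots> \<le> 48 * Z^2 * R"
    using QZ Q0 Rd d by (intro mult_mono power_mono) auto
  also have "\<dots> = 48 * (a+2)^6 * (c+1)^2 * R^(6*k+2*l+3)"
    unfolding Z_def by (simp add: power_mult_distrib power_add power_mult[symmetric] algebra_simps eval_nat_numeral)
  finally show ?thesis .
qed




theorem lemma11:
  fixes a c :: real and k l :: nat
  assumes "a > 0" and "c > 0"
  shows "\<exists>b::real. \<exists>r::nat. b > 0 \<and>
    (\<forall>(n::nat) (p::nat \<Rightarrow> real) (C::nat set \<Rightarrow> real) (i::nat) (\<delta>::real) (\<epsilon>::real) (m::nat).
       bounded_marginals a k n p \<longrightarrow> bounded_cost a k n C \<longrightarrow> i \<in> ground n \<longrightarrow>
       \<delta> > 0 \<longrightarrow> \<epsilon> > 0 \<longrightarrow> real m \<ge> b * (real n + 1 / \<delta> + 1 / \<epsilon>) ^ r \<longrightarrow>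
       measure_pmf.prob (samples m (prod_dist n p))
         {X. let v = marg_value (prod_dist n p) C i; w = est_value C m X i in
               (v \<ge> 1 / (c * real n ^ l) \<longrightarrow> (1 - \<epsilon>) * v \<le> w \<and> w \<le> (1 + \<epsilon>) * v) \<and>
               (\<bar>v\<bar> < 1 / (c * real n ^ l) \<longrightarrow> \<bar>v - w\<bar> \<le> \<epsilon>) \<and>
               (v \<le> - 1 / (c * real n ^ l) \<longrightarrow> (1 + \<epsilon>) * v \<le> w \<and> w \<le> (1 - \<epsilon>) * v)}
         \<ge> 1 - \<delta>)"
proof (intro exI[of _ "48 * (a+2)^6 * (c+1)^2"] exI[of _ "6*k+2*l+3"] conjI allI impI)
  have a: "a > 0" and c: "c > 0" by fact+
  show "48 * (a+2)^6 * (c+1)^2 > (0::real)" using a c by simp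
  fix n :: nat and p :: "nat \<Rightarrow> real" and C :: "nat set \<Rightarrow> real" and i :: nat and \<delta> \<epsilon> :: real and m :: nat
  assume bm: "bounded_marginals a k n p" and bc: "bounded_cost a k n C" and i: "i \<in> ground n"
    and d: "\<delta> > 0" and e: "\<epsilon> > 0"
    and msz: "real m \<ge> 48 * (a+2)^6 * (c+1)^2 * (real n + 1 / \<delta> + 1 / \<epsilon>) ^ (6*k+2*l+3)"
  have n: "n \<ge> 1" using i by simp
  have n1: "real n \<ge> 1" using n by simp
  define M0 where "M0 = a * real n ^ k"
  define M1 where "M1 = M0 + 1"
  define \<pi> where "\<pi> = 1 / M0"
  define \<theta> where "\<theta> = 1 / (c * real n ^ l)"
  define \<eta> where "\<eta> = min \<epsilon> 1 * min \<theta> 1"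
  define Q where "Q = M1 * (1 + M1) * M0 / \<eta>"
  define t where "t = M1 / (4 * Q)"
  define D where "D = prod_dist n p"
  define q where "q = p i"
  define \<mu>1 where "\<mu>1 = measure_pmf.expectation (Drest n p i) (\<lambda>T. C (insert i T))"
  define \<mu>0 where "\<mu>0 = measure_pmf.expectation (Drest n p i) C"
  have nk1: "1 \<le> real n ^ k" using n1 by (rule one_le_power)
  have nl1: "1 \<le> real n ^ l" using n1 by (rule one_le_power)
  have M0p: "M0 > 0" unfolding M0_def using a nk1 by (intro mult_pos_pos) linarith+
  have M1p: "M1 \<ge> 1" unfolding M1_def using M0p by simp
  have pip: "\<pi> > 0" unfolding \<pi>_def using M0p by simp
  have thp: "\<theta> > 0" unfolding \<theta>_def using c nl1 by (intro divide_pos_pos mult_pos_pos) linarith+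
  have etap: "\<eta> > 0" unfolding \<eta>_def using e thp by simp
  have eta1: "\<eta> \<le> 1" unfolding \<eta>_def using e thp by (intro mult_le_one) auto
  have "\<eta> \<le> min \<epsilon> 1 * 1" unfolding \<eta>_def using e thp by (intro mult_left_mono) auto
  then have eta_e: "\<eta> \<le> \<epsilon>" by linarith
  have eta_et: "\<eta> \<le> \<epsilon> * \<theta>" unfolding \<eta>_def using e thp
    by (intro mult_mono) auto
  have Qp: "Q > 0" unfolding Q_def using M0p M1p etap by simp
  have tp: "t > 0" unfolding t_def using M1p Qp by simp
  have qb: "\<pi> \<le> q" "q \<le> 1 - \<pi>" using bm i unfolding bounded_marginals_def q_def \<pi>_def M0_def by auto
  have q0: "0 < q" "q < 1" using qb pip by linarith+
  have t_eq: "t = \<eta> * \<pi> / (4 * (1 + M1))"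
  proof -
    have nz: "M1 \<noteq> 0" "1 + M1 \<noteq> 0" "M0 \<noteq> 0" "\<eta> \<noteq> 0" using M0p M1p etap by auto
    have "M1 / (4 * (M1 * (1 + M1) * M0 / \<eta>)) = \<eta> * (1 / M0) / (4 * (1 + M1))"
      using nz by (simp add: divide_simps)
    then show ?thesis unfolding t_def Q_def \<pi>_def .
  qed
  have t_pi: "t \<le> \<pi> / 2"
  proof -
    have "t \<le> 1 * \<pi> / (4 * 1)" unfolding t_eq using eta1 pip M1p etap
      by (intro divide_mono mult_right_mono) auto
    then show ?thesis using tp by simp
  qed
  have err: "4 * t * (1 + M1) / \<pi> = \<eta>" unfolding t_eq using pip M1p by (simp add: divide_simps)
  have sb: "48 * Q^2 / \<delta> \<le> real m"
    using size_bound[OF a c n d e, of k l] msz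
    unfolding Q_def M1_def \<eta>_def \<theta>_def M0_def by linarith
  have mpos: "m > 0"
  proof -
    have "0 < 48 * Q^2 / \<delta>" using Qp d by simp
    then show ?thesis using sb by simp
  qed
  have bad_bound: "M1^2 / (real m * t^2) \<le> \<delta> / 3"
  proof -
    have "M1^2 / (real m * t^2) = 16 * Q^2 / real m"
      unfolding t_def using M1p Qp mpos by (simp add: divide_simps power2_eq_square)
    also have "\<dots> \<le> \<delta> / 3" using sb d mpos by (simp add: field_simps)
    finally show ?thesis .
  qed
  have Cb: "0 \<le> C S \<and> C S \<le> M0" if "S \<subseteq> ground n" for S
    using bc that unfolding bounded_cost_def M0_def by auto
  have suppD: "S \<subseteq> ground n" if "S \<in> set_pmf D" for S
    using set_prod_dist[of n p] that unfolding D_def by blast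
  have suppR: "T \<subseteq> ground n \<and> i \<notin> T" if "T \<in> set_pmf (Drest n p i)" for T
    using set_Drest[of n p i] that by blast
  have mu1b: "\<mu>1 \<in> {0..M0}" unfolding \<mu>1_def
    by (rule exp_bounds_pmf[OF finite_Drest]) (use suppR Cb i in auto)
  have mu0b: "\<mu>0 \<in> {0..M0}" unfolding \<mu>0_def
    by (rule exp_bounds_pmf[OF finite_Drest]) (use suppR Cb in auto)
  have v_eq: "marg_value D C i = \<mu>1 - \<mu>0"
    unfolding D_def \<mu>1_def \<mu>0_def using marg_eq[where n=n and p=p and i=i, OF i q0[unfolded q_def]] by simp
  define g1 where "g1 = (\<lambda>S::nat set. if i \<in> S then 1 else 0 :: real)"
  define g2 where "g2 = (\<lambda>S::nat set. if i \<in> S then C S else 0)"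
  define g3 where "g3 = (\<lambda>S::nat set. if i \<notin> S then C S else 0)"
  have E1: "measure_pmf.expectation D g1 = q"
    unfolding D_def g1_def q_def using exp_in[where n=n and p=p and i=i, OF i q0[unfolded q_def], where f="\<lambda>_. 1"] by simp
  have E2: "measure_pmf.expectation D g2 = q * \<mu>1"
    unfolding D_def g2_def q_def \<mu>1_def using exp_in[where n=n and p=p and i=i, OF i q0[unfolded q_def], where f=C] by simp
  have E3: "measure_pmf.expectation D g3 = (1 - q) * \<mu>0"
    unfolding D_def g3_def q_def \<mu>0_def using exp_out[where n=n and p=p and i=i, OF i q0[unfolded q_def], where f=C] by simp
  have r1: "g1 S \<in> {0..M1}" if "S \<in> set_pmf D" for S unfolding g1_def using M1p by auto
  have r2: "g2 S \<in> {0..M1}" if "S \<in> set_pmf D" for S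
    unfolding g2_def M1_def using Cb[OF suppD[OF that]] by auto
  have r3: "g3 S \<in> {0..M1}" if "S \<in> set_pmf D" for S
    unfolding g3_def M1_def using Cb[OF suppD[OF that]] by auto
  define B1 where "B1 = {X. t \<le> \<bar>(\<Sum>j<m. g1 (X j)) / real m - measure_pmf.expectation D g1\<bar>}"
  define B2 where "B2 = {X. t \<le> \<bar>(\<Sum>j<m. g2 (X j)) / real m - measure_pmf.expectation D g2\<bar>}"
  define B3 where "B3 = {X. t \<le> \<bar>(\<Sum>j<m. g3 (X j)) / real m - measure_pmf.expectation D g3\<bar>}"
  have P1: "measure_pmf.prob (samples m D) B1 \<le> \<delta> / 3"
  proof -
    have "measure_pmf.prob (samples m D) B1 \<le> M1^2 / (real m * t^2)"
      unfolding B1_def by (rule hoeff[where D=D and g=g1 and M=M1, OF mpos _ tp]) (use M1p r1 in auto)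
    then show ?thesis using bad_bound by linarith
  qed
  have P2: "measure_pmf.prob (samples m D) B2 \<le> \<delta> / 3"
  proof -
    have "measure_pmf.prob (samples m D) B2 \<le> M1^2 / (real m * t^2)"
      unfolding B2_def by (rule hoeff[where D=D and g=g2 and M=M1, OF mpos _ tp]) (use M1p r2 in auto)
    then show ?thesis using bad_bound by linarith
  qed
  have P3: "measure_pmf.prob (samples m D) B3 \<le> \<delta> / 3"
  proof -
    have "measure_pmf.prob (samples m D) B3 \<le> M1^2 / (real m * t^2)"
      unfolding B3_def by (rule hoeff[where D=D and g=g3 and M=M1, OF mpos _ tp]) (use M1p r3 in auto)
    then show ?thesis using bad_bound by linarith
  qed
  define Good where "Good = {X. let v = marg_value (prod_dist n p) C i; w = est_value C m X i in
               (v \<ge> 1 / (c * real n ^ l) \<longrightarrow> (1 - \<epsilon>) * v \<le> w \<and> w \<le> (1 + \<epsilon>) * v) \<and>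
               (\<bar>v\<bar> < 1 / (c * real n ^ l) \<longrightarrow> \<bar>v - w\<bar> \<le> \<epsilon>) \<and>
               (v \<le> - 1 / (c * real n ^ l) \<longrightarrow> (1 + \<epsilon>) * v \<le> w \<and> w \<le> (1 - \<epsilon>) * v)}"
  have sub: "UNIV - (B1 \<union> B2 \<union> B3) \<subseteq> Good"
  proof
    fix X assume X: "X \<in> UNIV - (B1 \<union> B2 \<union> B3)"
    define K where "K = (\<Sum>j<m. g1 (X j))"
    define A where "A = (\<Sum>j<m. g2 (X j))"
    define B where "B = (\<Sum>j<m. g3 (X j))"
    have hK: "\<bar>K / real m - q\<bar> < t" using X E1 unfolding B1_def K_def by auto
    have hA: "\<bar>A / real m - q * \<mu>1\<bar> < t" using X E2 unfolding B2_def A_def by auto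
    have hB: "\<bar>B / real m - (1 - q) * \<mu>0\<bar> < t" using X E3 unfolding B3_def B_def by auto
    have w_eq: "est_value C m X i = A / K - B / (real m - K)"
      unfolding est_eq A_def B_def K_def g1_def g2_def g3_def ..
    have k1: "\<pi> / 2 \<le> K / real m" using hK qb t_pi by linarith
    have k2: "\<pi> / 2 \<le> 1 - K / real m" using hK qb t_pi by linarith
    have mr: "real m > 0" using mpos by simp
    have f1: "A / K = (A / real m) / (K / real m)" using mr by simp
    have f2: "B / (real m - K) = (B / real m) / (1 - K / real m)"
      using mr by (simp add: field_simps)
    have e1: "\<bar>(A / real m) / (K / real m) - \<mu>1\<bar> \<le> 2 * t * (1 + M1) / \<pi>"
      by (rule ratio[OF pip k1 hA hK]) (use mu1b M1_def in auto)
    have hK': "\<bar>(1 - K / real m) - (1 - q)\<bar> < t" using hK by simp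
    have e2: "\<bar>(B / real m) / (1 - K / real m) - \<mu>0\<bar> \<le> 2 * t * (1 + M1) / \<pi>"
      by (rule ratio[OF pip k2 hB hK']) (use mu0b M1_def in auto)
    have gen: "\<And>x y u z::real. \<bar>(x - y) - (u - z)\<bar> = \<bar>(x - u) - (y - z)\<bar>"
      by (simp add: algebra_simps)
    have "\<bar>est_value C m X i - marg_value D C i\<bar> \<le> 4 * t * (1 + M1) / \<pi>"
    proof -
      have "\<bar>est_value C m X i - marg_value D C i\<bar> =
          \<bar>((A / real m) / (K / real m) - \<mu>1) - ((B / real m) / (1 - K / real m) - \<mu>0)\<bar>"
        unfolding w_eq v_eq f1 f2 by (rule gen)
      also have "\<dots> \<le> 2 * t * (1 + M1) / \<pi> + 2 * t * (1 + M1) / \<pi>"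
        by (rule order_trans[OF abs_triangle_ineq4 add_mono[OF e1 e2]])
      also have "\<dots> = 4 * t * (1 + M1) / \<pi>" by simp
      finally show ?thesis .
    qed
    then have close: "\<bar>est_value C m X i - marg_value D C i\<bar> \<le> \<eta>" using err by simp
    have cpos: "c * real n ^ l > 0" using c nl1 by (intro mult_pos_pos) linarith+
    show "X \<in> Good"
      unfolding Good_def Let_def mem_Collect_eq
      by (rule cases_final[OF close[unfolded D_def] eta_et[unfolded \<theta>_def] eta_e cpos e])
  qed
  have "measure_pmf.prob (samples m D) Good \<ge> 1 - 3 * (\<delta> / 3)"
    by (rule union3_bound[OF sub P1 P2 P3])
  show "measure_pmf.prob (samples m (prod_dist n p)) {X. let v = marg_value (prod_dist n p) C i; w = est_value C m X i in
               (v \<ge> 1 / (c * real n ^ l) \<longrightarrow> (1 - \<epsilon>) * v \<le> w \<and> w \<le> (1 + \<epsilon>) * v) \<and>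
               (\<bar>v\<bar> < 1 / (c * real n ^ l) \<longrightarrow> \<bar>v - w\<bar> \<le> \<epsilon>) \<and>
               (v \<le> - 1 / (c * real n ^ l) \<longrightarrow> (1 + \<epsilon>) * v \<le> w \<and> w \<le> (1 - \<epsilon>) * v)}
         \<ge> 1 - \<delta>"
  proof -
    have eq: "1 - 3 * (\<delta> / 3) = 1 - \<delta>" by simp
    show ?thesis using \<open>measure_pmf.prob (samples m D) Good \<ge> 1 - 3 * (\<delta> / 3)\<close>
      unfolding Good_def D_def eq .
  qed
qed


end
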